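(* For $n \ge 8$, let $\mu(n)$ be the minimum number of edges of a connected non-prime graph of order $n$. Then $\mu(n) \le n+1$ if $n$ is even, and $\mu(n) \le n+2$ if $n$ is odd.
   Context: Graphs are finite and simple. A prime labeling of a graph $G$ of order $n$ is a bijection $\alpha: V(G) \to \{1,2,\dots,n\}$ such that $\gcd(\alpha(u),\alpha(v)) = 1$ for every edge $uv \in E(G)$. $G$ is prime if it admits a prime labeling, and non-prime otherwise. *)

theory Defs
  imports Main
begin

definition simple_graph :: "'a set \<Rightarrow> 'a set set \<Rightarrow> bool" where
  "simple_graph V E \<longleftrightarrow> finite V \<and> (\<forall>e\<in>E. \<exists>u v. u \<in> V \<and> v \<in> V \<and> u \<noteq> v \<and> e = {u, v})"

definition adj :: "'a set set \<Rightarrow> 'a \<Rightarrow> 'a \<Rightarrow> bool" where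
  "adj E u v \<longleftrightarrow> {u, v} \<in> E"

definition connected_graph :: "'a set \<Rightarrow> 'a set set \<Rightarrow> bool" where
  "connected_graph V E \<longleftrightarrow> V \<noteq> {} \<and> (\<forall>u\<in>V. \<forall>v\<in>V. (adj E)\<^sup>*\<^sup>* u v)"

definition prime_labeling :: "'a set \<Rightarrow> 'a set set \<Rightarrow> ('a \<Rightarrow> nat) \<Rightarrow> bool" where
  "prime_labeling V E \<alpha> \<longleftrightarrow> bij_betw \<alpha> V {1..card V} \<and>
     (\<forall>u v. {u, v} \<in> E \<longrightarrow> gcd (\<alpha> u) (\<alpha> v) = 1)"

definition prime_graph :: "'a set \<Rightarrow> 'a set set \<Rightarrow> bool" where
  "prime_graph V E \<longleftrightarrow> (\<exists>\<alpha>. prime_labeling V E \<alpha>)"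

text \<open>Minimum number of edges of a connected non-prime graph of order n
  (vertices taken from nat; every finite graph is isomorphic to one such).\<close>
definition mu :: "nat \<Rightarrow> nat" where
  "mu n = (LEAST m. \<exists>(V::nat set) E. simple_graph V E \<and> card V = n \<and>
              connected_graph V E \<and> \<not> prime_graph V E \<and> card E = m)"

end

theory Submission
  imports Defs
begin

definition GE :: "nat \<Rightarrow> nat \<Rightarrow> nat set set" where
  "GE n t = {{i, i+1} | i. i+1 < n} \<union> {{n-3*j, n-3*j+2} | j. j \<in> {1..t}}"

definition blk :: "nat \<Rightarrow> nat \<Rightarrow> nat \<Rightarrow> nat" where
  "blk n t v = (if v < n - 3*t then v div 2 else (n-3*t) div 2 + (v - (n-3*t)) div 3)"

lemma path_in: "i+1 < n \<Longrightarrow> {i, i+1} \<in> GE n t"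
  unfolding GE_def by (rule UnI1, rule CollectI, rule exI[of _ i]) simp

lemma tri_in: "1 \<le> j \<Longrightarrow> j \<le> t \<Longrightarrow> {n-3*j, n-3*j+2} \<in> GE n t"
  unfolding GE_def by (rule UnI2, rule CollectI, rule exI[of _ j]) simp

lemma blk_edge:
  assumes T: "3*t \<le> n" and ev: "even (n - 3*t)" and u: "u < n" and v: "v < n"
    and ne: "u \<noteq> v" and b: "blk n t u = blk n t v"
  shows "{u,v} \<in> GE n t"
proof -
  define m where "m = n - 3*t"
  have ev': "even m" using ev m_def by simp
  consider "u < m" "v < m" | "u < m" "\<not> v < m" | "\<not> u < m" "v < m" | "\<not> u < m" "\<not> v < m" by blast
  then show ?thesis
  proof cases
    case 1
    then have "u div 2 = v div 2" using b unfolding blk_def m_def by simp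
    then have "u = v + 1 \<or> v = u + 1" using ne by presburger
    then show ?thesis
    proof
      assume "u = v + 1" then show ?thesis using path_in[of v n t] u by (simp add: insert_commute)
    next
      assume "v = u + 1" then show ?thesis using path_in[of u n t] v by simp
    qed
  next
    case 2
    have "u div 2 < m div 2" using 2 ev' by (auto elim!: evenE)
    moreover have "blk n t v \<ge> m div 2" using 2 unfolding blk_def m_def by simp
    ultimately show ?thesis using b 2 unfolding blk_def m_def by simp
  next
    case 3
    have "v div 2 < m div 2" using 3 ev' by (auto elim!: evenE)
    moreover have "blk n t u \<ge> m div 2" using 3 unfolding blk_def m_def by simp
    ultimately show ?thesis using b 3 unfolding blk_def m_def by simp
  next
    case 4
    define i where "i = (u - m) div 3"
    define a where "a = (u - m) mod 3"
    define c where "c = (v - m) mod 3"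
    have ieq: "(v - m) div 3 = i" using b 4 unfolding blk_def m_def i_def by simp
    have ue: "u = m + 3*i + a" using 4 unfolding i_def a_def by simp
    have ve: "v = m + 3*i + c" using 4 ieq unfolding c_def by (metis add.assoc div_mult_mod_eq le_add_diff_inverse linorder_not_less mult.commute)
    have a3: "a < 3" "c < 3" unfolding a_def c_def by auto
    have ac: "a \<noteq> c" using ue ve ne by auto
    have it: "i < t" using ue u T m_def by simp
    have tri: "{m + 3*i, m+3*i+2} \<in> GE n t"
    proof -
      have "n - 3*(t-i) = m + 3*i" using it T m_def by simp
      then show ?thesis using tri_in[of "t-i" t n] it by simp
    qed
    have p0: "{m+3*i, m+3*i+1} \<in> GE n t" using path_in[of "m+3*i" n t] it T m_def by simp
    have p1: "{m+3*i+1, m+3*i+2} \<in> GE n t" using path_in[of "m+3*i+1" n t] it T m_def by simp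
    have "a = 0 \<and> c = 1 \<or> a = 1 \<and> c = 0 \<or> a = 0 \<and> c = 2 \<or> a = 2 \<and> c = 0 \<or> a = 1 \<and> c = 2 \<or> a = 2 \<and> c = 1"
      using a3 ac by auto
    then show ?thesis unfolding ue ve
      using tri p0 p1 by (elim disjE conjE) (simp_all add: insert_commute)
  qed
qed

lemma reach:
  assumes "u + d < n"
  shows "(adj (GE n t))\<^sup>*\<^sup>* u (u+d) \<and> (adj (GE n t))\<^sup>*\<^sup>* (u+d) u"
  using assms
proof (induction d)
  case 0 then show ?case by simp
next
  case (Suc d)
  have e: "{u+d, u+d+1} \<in> GE n t" using path_in[of "u+d" n t] Suc.prems by simp
  have a1: "adj (GE n t) (u+d) (u+Suc d)" using e unfolding adj_def by simp
  have a2: "adj (GE n t) (u+Suc d) (u+d)" using e unfolding adj_def by (simp add: insert_commute)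
  from Suc.IH Suc.prems have ih: "(adj (GE n t))\<^sup>*\<^sup>* u (u+d) \<and> (adj (GE n t))\<^sup>*\<^sup>* (u+d) u" by simp
  show ?case using ih a1 a2
    by (meson converse_rtranclp_into_rtranclp rtranclp.rtrancl_into_rtrancl)
qed

lemma card_evens: "card {x \<in> {1..n}. even x} = n div 2"
proof -
  have "{x \<in> {1..n}. even x} = (\<lambda>i. 2*i) ` {1..n div 2}"
  proof
    show "{x \<in> {1..n}. even x} \<subseteq> (\<lambda>i. 2*i) ` {1..n div 2}"
    proof
      fix x assume "x \<in> {x \<in> {1..n}. even x}"
      then obtain i where "x = 2*i" "1 \<le> x" "x \<le> n" by (auto elim!: evenE)
      then show "x \<in> (\<lambda>i. 2*i) ` {1..n div 2}" by force
    qed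
  next
    show "(\<lambda>i. 2*i) ` {1..n div 2} \<subseteq> {x \<in> {1..n}. even x}" by auto
  qed
  moreover have "card ((\<lambda>i. 2*i) ` {1..n div 2}) = n div 2"
    by (subst card_image) (auto simp: inj_on_def)
  ultimately show ?thesis by simp
qed

lemma main:
  assumes T: "3*t \<le> n" and ev: "even (n - 3*t)" and lt: "(n - 3*t) div 2 + t < n div 2"
  shows "mu n \<le> n - 1 + t"
proof -
  define V where "V = {0..<n}"
  define E where "E = GE n t"
  have n0: "n > 0" using lt by simp
  have sg: "simple_graph V E"
    unfolding simple_graph_def V_def E_def GE_def
  proof (intro conjI ballI)
    fix e assume "e \<in> {{i, i+1} | i. i+1 < n} \<union> {{n-3*j, n-3*j+2} | j. j \<in> {1..t}}"
    then show "\<exists>u v. u \<in> {0..<n} \<and> v \<in> {0..<n} \<and> u \<noteq> v \<and> e = {u, v}"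
    proof
      assume "e \<in> {{i, i+1} | i. i+1 < n}"
      then obtain i where "e = {i,i+1}" "i+1<n" by blast
      then show ?thesis by (intro exI[of _ i] exI[of _ "i+1"]) auto
    next
      assume "e \<in> {{n-3*j, n-3*j+2} | j. j \<in> {1..t}}"
      then obtain j where "e = {n-3*j, n-3*j+2}" "1 \<le> j" "j \<le> t" by auto
      then show ?thesis using T by (intro exI[of _ "n-3*j"] exI[of _ "n-3*j+2"]) auto
    qed
  qed simp
  have conn: "connected_graph V E"
    unfolding connected_graph_def
  proof (intro conjI ballI)
    show "V \<noteq> {}" using n0 V_def by auto
  next
    fix u v assume "u \<in> V" "v \<in> V"
    then have "u < n" "v < n" using V_def by auto
    have "(adj E)\<^sup>*\<^sup>* u 0" using reach[of 0 u n t] \<open>u < n\<close> E_def by simp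
    moreover have "(adj E)\<^sup>*\<^sup>* 0 v" using reach[of 0 v n t] \<open>v < n\<close> E_def by simp
    ultimately show "(adj E)\<^sup>*\<^sup>* u v" by (rule rtranclp_trans)
  qed
  have cV: "card V = n" using V_def by simp
  have np: "\<not> prime_graph V E"
  proof
    assume "prime_graph V E"
    then obtain \<alpha> where bij: "bij_betw \<alpha> V {1..n}"
      and cop: "\<And>u v. {u,v} \<in> E \<Longrightarrow> gcd (\<alpha> u) (\<alpha> v) = 1"
      unfolding prime_graph_def prime_labeling_def cV by blast
    define S where "S = {v \<in> V. even (\<alpha> v)}"
    have "\<alpha> ` S = {x \<in> {1..n}. even x}"
      using bij unfolding S_def bij_betw_def by auto
    moreover have "inj_on \<alpha> S" using bij unfolding S_def bij_betw_def by (auto intro: inj_on_subset)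
    ultimately have cS: "card S = n div 2" using card_evens card_image by metis
    have "inj_on (blk n t) S"
    proof (rule inj_onI)
      fix u v assume uS: "u \<in> S" and vS: "v \<in> S" and b: "blk n t u = blk n t v"
      show "u = v"
      proof (rule ccontr)
        assume "u \<noteq> v"
        then have "{u,v} \<in> E" using blk_edge[OF T ev _ _ _ b] uS vS unfolding S_def V_def E_def by auto
        then have "gcd (\<alpha> u) (\<alpha> v) = 1" by (rule cop)
        moreover have "2 dvd gcd (\<alpha> u) (\<alpha> v)" using uS vS unfolding S_def by simp
        ultimately show False by simp
      qed
    qed
    then have "card S = card (blk n t ` S)" by (simp add: card_image)
    also have "\<dots> \<le> card {0..<(n - 3*t) div 2 + t}"
    proof (rule card_mono)
      show "blk n t ` S \<subseteq> {0..<(n - 3*t) div 2 + t}"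
      proof
        fix x assume "x \<in> blk n t ` S"
        then obtain v where "v \<in> S" "x = blk n t v" by blast
        then have vn: "v < n" unfolding S_def V_def by simp
        show "x \<in> {0..<(n - 3*t) div 2 + t}"
        proof (cases "v < n - 3*t")
          case True
          from ev obtain k where k: "n - 3*t = 2*k" by (rule evenE)
          have "v div 2 < (n-3*t) div 2" unfolding k using True k by presburger
          then show ?thesis using True \<open>x = _\<close> unfolding blk_def by simp
        next
          case False
          have "v - (n-3*t) < t * 3" using vn T False by simp
          then have "(v - (n-3*t)) div 3 < t" by (rule less_mult_imp_div_less)
          then show ?thesis using False \<open>x = _\<close> unfolding blk_def by simp
        qed
      qed
    qed simp
    finally show False using cS lt by simp
  qed
  have cE: "card E \<le> n - 1 + t"
  proof -
    have sub: "E \<subseteq> (\<lambda>i. {i, i+1}) ` {0..<n-1} \<union> (\<lambda>j. {n-3*j, n-3*j+2}) ` {1..t}"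
    proof
      fix e assume "e \<in> E"
      then have "e \<in> {{i, i+1} | i. i+1 < n} \<or> e \<in> {{n-3*j, n-3*j+2} | j. j \<in> {1..t}}"
        unfolding E_def GE_def by blast
      then show "e \<in> (\<lambda>i. {i, i+1}) ` {0..<n-1} \<union> (\<lambda>j. {n-3*j, n-3*j+2}) ` {1..t}"
      proof
        assume "e \<in> {{i, i+1} | i. i+1 < n}"
        then obtain i where "e = {i,i+1}" "i+1<n" by blast
        then have "i \<in> {0..<n-1}" "e = (\<lambda>i. {i, i+1}) i" by auto
        then show ?thesis by (intro UnI1) (rule image_eqI)
      next
        assume "e \<in> {{n-3*j, n-3*j+2} | j. j \<in> {1..t}}"
        then obtain j where "e = {n-3*j, n-3*j+2}" "j \<in> {1..t}" by blast
        then show ?thesis by (intro UnI2) (rule image_eqI)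
      qed
    qed
    have "card E \<le> card ((\<lambda>i. {i, i+1}) ` {0..<n-1} \<union> (\<lambda>j. {n-3*j, n-3*j+2}) ` {1..t})"
      by (rule card_mono[OF _ sub]) simp
    also have "\<dots> \<le> card ((\<lambda>i. {i, i+1}) ` {0..<n-1}) + card ((\<lambda>j. {n-3*j, n-3*j+2}) ` {1..t})"
      by (rule card_Un_le)
    also have "\<dots> \<le> card {0..<n-1} + card {1..t}"
      by (intro add_mono card_image_le) auto
    finally show ?thesis by simp
  qed
  have "mu n \<le> card E"
    unfolding mu_def by (rule Least_le) (use sg cV conn np in \<open>intro exI[of _ V] exI[of _ E], simp\<close>)
  then show ?thesis using cE by simp
qed

theorem theorem10p3:
  fixes n :: nat
  assumes "n \<ge> 8"
  shows "(even n \<longrightarrow> mu n \<le> n + 1) \<and> (odd n \<longrightarrow> mu n \<le> n + 2)"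
proof (intro conjI impI)
  assume "even n"
  then obtain k where k: "n = 2*k" by (rule evenE)
  have "mu n \<le> n - 1 + 2"
  proof (rule main)
    show "3*2 \<le> n" using assms by simp
    show "even (n - 3*2)" using k assms by (simp add: k)
    show "(n - 3*2) div 2 + 2 < n div 2" using k assms by simp
  qed
  then show "mu n \<le> n + 1" using assms by simp
next
  assume "odd n"
  then obtain k where k: "n = 2*k+1" by (rule oddE)
  have "mu n \<le> n - 1 + 3"
  proof (rule main)
    show "3*3 \<le> n" using assms k by presburger
    show "even (n - 3*3)" using k assms by simp
    show "(n - 3*3) div 2 + 3 < n div 2" using k assms by simp
  qed
  then show "mu n \<le> n + 2" using assms by simp
qed

end
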